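(* Let $\gamma>0$, $\Gamma_\infty>0$, $R\in\mathbb{N}$, and for $i\in\mathcal{N}=\{1,\dots,N\}$ let $d_i\in\mathbb{N}$, $\delta_i>0$, $\tau^i_{\max}>0$ satisfy \[ \delta_i+\frac{d_i}{R}<\frac{\gamma}{2\Gamma_\infty}\qquad\text{for all } i\in\mathcal{N}. \] Set $\xi_i:=2\Gamma_\infty d_i/R$, $\eta_i:=\gamma-2\Gamma_\infty\delta_i$ and \[ \tilde\omega:=\min_{i\in\mathcal{N}}\left(\eta_i-\frac{W(\xi_i\tau^i_{\max}e^{\eta_i\tau^i_{\max}})}{\tau^i_{\max}}\right),\qquad \kappa(\omega):=\max_{i\in\mathcal{N}}\left(\delta_i+\frac{d_ie^{\omega\tau^i_{\max}}}{R}\right). \] Then $\tilde\omega>0$, and for $\omega\in\mathbb{R}$, the condition $0<\omega\le\gamma-2\Gamma_\infty\kappa(\omega)$ holds if and only if $0<\omega\le\tilde\omega$.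
   Context: $W$ denotes the Lambert $W$-function on $[0,\infty)$: $W(y)$ is the unique solution $x\ge0$ of $xe^x=y$. (In the paper, $d_i$ are node degrees of a connected graph, $\gamma\le\lambda_2(L)$ and $\Gamma_\infty=\sup_{t\ge0}\|e^{\gamma t}(e^{-Lt}-\mathbf{1}\bar{\mathbf{1}})\|_\infty$, but the statement only uses positivity of these quantities.) *)

theory Defs
  imports Complex_Main
begin

definition LambertW :: "real \<Rightarrow> real" where
  "LambertW y = (THE x. x \<ge> 0 \<and> x * exp x = y)"

end

theory Submission
  imports Defs
begin

lemma xexp_strict: "0 \<le> (x::real) \<Longrightarrow> x < x' \<Longrightarrow> x * exp x < x' * exp x'"
proof -
  assume a: "0 \<le> x" "x < x'"
  have "x * exp x \<le> x * exp x'" using a by (intro mult_left_mono) auto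
  also have "\<dots> < x' * exp x'" using a by (intro mult_strict_right_mono) auto
  finally show ?thesis .
qed

lemma LambertW_prop:
  assumes "(y::real) \<ge> 0"
  shows "LambertW y \<ge> 0 \<and> LambertW y * exp (LambertW y) = y"
proof -
  have "\<exists>x\<ge>0. x \<le> y \<and> x * exp x = y"
  proof (rule IVT)
    show "0 * exp 0 \<le> y" using assms by simp
    have "1 \<le> exp y" using assms by simp
    then show "y \<le> y * exp y" using assms by (metis mult_left_mono mult.right_neutral)
    show "0 \<le> y" by fact
    show "\<forall>x. 0 \<le> x \<and> x \<le> y \<longrightarrow> isCont (\<lambda>x. x * exp x) x" by (auto intro!: continuous_intros)
  qed
  then obtain x where x: "x \<ge> 0" "x * exp x = y" by auto
  have "\<exists>!x. x \<ge> 0 \<and> x * exp x = y"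
  proof (rule ex1I[of _ x])
    show "x \<ge> 0 \<and> x * exp x = y" using x by auto
    fix z assume z: "z \<ge> 0 \<and> z * exp z = y"
    show "z = x"
    proof (rule ccontr)
      assume "z \<noteq> x"
      then have "z < x \<or> x < z" by auto
      then show False using xexp_strict[of z x] xexp_strict[of x z] x z by auto
    qed
  qed
  then show ?thesis unfolding LambertW_def by (rule theI')
qed

lemma per_i:
  fixes xi eta tau :: real
  assumes "xi \<ge> 0" "eta > xi" "tau > 0"
  defines "w \<equiv> eta - LambertW (xi * tau * exp (eta * tau)) / tau"
  shows "w > 0 \<and> (\<forall>\<omega>. \<omega> + xi * exp (\<omega> * tau) \<le> eta \<longleftrightarrow> \<omega> \<le> w)"
proof -
  define x where "x = LambertW (xi * tau * exp (eta * tau))"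
  have x: "x \<ge> 0" "x * exp x = xi * tau * exp (eta * tau)"
    using LambertW_prop[of "xi * tau * exp (eta * tau)"] assms unfolding x_def by auto
  have wt: "w * tau = eta * tau - x" using assms(3) unfolding w_def x_def by (simp add: field_simps)
  have "xi * exp (w * tau) = xi * exp (eta * tau) / exp x" unfolding wt by (simp add: exp_diff)
  also have "\<dots> = x / tau" using x assms(3) by (simp add: field_simps)
  finally have gw: "w + xi * exp (w * tau) = eta" unfolding w_def x_def[symmetric] by simp
  have mono: "a + xi * exp (a * tau) < b + xi * exp (b * tau)" if "a < b" for a b
  proof -
    have "exp (a * tau) \<le> exp (b * tau)" using that assms(3) by simp
    then have "xi * exp (a * tau) \<le> xi * exp (b * tau)" using assms(1) by (rule mult_left_mono)
    then show ?thesis using that by linarith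
  qed
  have "0 < w"
  proof (rule ccontr)
    assume "\<not> 0 < w"
    then have "w + xi * exp (w * tau) \<le> 0 + xi * exp (0 * tau)"
      using mono[of w 0] by (cases "w = 0") auto
    then show False using gw assms(2) by simp
  qed
  moreover have "\<omega> + xi * exp (\<omega> * tau) \<le> eta \<longleftrightarrow> \<omega> \<le> w" for \<omega>
    using mono[of \<omega> w] mono[of w \<omega>] gw by (cases "\<omega> = w"; cases "\<omega> < w") auto
  ultimately show ?thesis by auto
qed

theorem lemma5:
  fixes gamma Gamma_inf :: real and R N :: nat
    and d :: "nat \<Rightarrow> nat" and delta tau_max :: "nat \<Rightarrow> real"
  assumes "gamma > 0" and "Gamma_inf > 0" and "R > 0" and "N \<ge> 1"
    and "\<forall>i\<in>{1..N}. delta i > 0"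
    and "\<forall>i\<in>{1..N}. tau_max i > 0"
    and "\<forall>i\<in>{1..N}. delta i + real (d i) / real R < gamma / (2 * Gamma_inf)"
  shows "let xi = (\<lambda>i. 2 * Gamma_inf * real (d i) / real R);
             eta = (\<lambda>i. gamma - 2 * Gamma_inf * delta i);
             omega_t = Min ((\<lambda>i. eta i - LambertW (xi i * tau_max i * exp (eta i * tau_max i)) / tau_max i) ` {1..N});
             kappa = (\<lambda>\<omega>::real. Max ((\<lambda>i. delta i + real (d i) * exp (\<omega> * tau_max i) / real R) ` {1..N}))
         in omega_t > 0 \<and>
            (\<forall>\<omega>::real. (0 < \<omega> \<and> \<omega> \<le> gamma - 2 * Gamma_inf * kappa \<omega>) \<longleftrightarrow> (0 < \<omega> \<and> \<omega> \<le> omega_t))"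
proof -
  define xi where "xi = (\<lambda>i. 2 * Gamma_inf * real (d i) / real R)"
  define eta where "eta = (\<lambda>i. gamma - 2 * Gamma_inf * delta i)"
  define w where "w = (\<lambda>i. eta i - LambertW (xi i * tau_max i * exp (eta i * tau_max i)) / tau_max i)"
  have P: "w i > 0 \<and> (\<forall>\<omega>. \<omega> + xi i * exp (\<omega> * tau_max i) \<le> eta i \<longleftrightarrow> \<omega> \<le> w i)"
    if i: "i \<in> {1..N}" for i
    unfolding w_def
  proof (rule per_i)
    show "xi i \<ge> 0" using assms(2) unfolding xi_def by simp
    show "tau_max i > 0" using assms(6) i by auto
    have "delta i + real (d i) / real R < gamma / (2 * Gamma_inf)" using assms(7) i by auto
    then have "2 * Gamma_inf * (delta i + real (d i) / real R) < gamma"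
      using assms(2) by (simp add: field_simps)
    then show "eta i > xi i" unfolding eta_def xi_def by (simp add: algebra_simps)
  qed
  have ne: "{1..N} \<noteq> {}" using assms(4) by auto
  have pos: "Min (w ` {1..N}) > 0" using ne P by (simp add: Min_gr_iff)
  have eq: "(\<omega> \<le> gamma - 2 * Gamma_inf * Max ((\<lambda>i. delta i + real (d i) * exp (\<omega> * tau_max i) / real R) ` {1..N}))
     \<longleftrightarrow> \<omega> \<le> Min (w ` {1..N})" for \<omega>
  proof -
    have "(\<omega> \<le> gamma - 2 * Gamma_inf * Max ((\<lambda>i. delta i + real (d i) * exp (\<omega> * tau_max i) / real R) ` {1..N}))
       \<longleftrightarrow> Max ((\<lambda>i. delta i + real (d i) * exp (\<omega> * tau_max i) / real R) ` {1..N}) \<le> (gamma - \<omega>) / (2 * Gamma_inf)"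
      using assms(2) by (simp add: field_simps)
    also have "\<dots> \<longleftrightarrow> (\<forall>i\<in>{1..N}. delta i + real (d i) * exp (\<omega> * tau_max i) / real R \<le> (gamma - \<omega>) / (2 * Gamma_inf))"
      using ne by (simp add: Max_le_iff)
    also have "\<dots> \<longleftrightarrow> (\<forall>i\<in>{1..N}. \<omega> + xi i * exp (\<omega> * tau_max i) \<le> eta i)"
    proof -
      have "delta i + real (d i) * exp (\<omega> * tau_max i) / real R \<le> (gamma - \<omega>) / (2 * Gamma_inf)
          \<longleftrightarrow> \<omega> + xi i * exp (\<omega> * tau_max i) \<le> eta i" for i
        using assms(2,3) unfolding xi_def eta_def by (simp add: field_simps)
      then show ?thesis by simp
    qed
    also have "\<dots> \<longleftrightarrow> (\<forall>i\<in>{1..N}. \<omega> \<le> w i)" using P by auto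
    also have "\<dots> \<longleftrightarrow> \<omega> \<le> Min (w ` {1..N})" using ne by (simp add: Min_ge_iff)
    finally show ?thesis .
  qed
  show ?thesis unfolding Let_def xi_def[symmetric] eta_def[symmetric] w_def[symmetric]
    using pos eq by auto
qed

end
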